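(* Let $G$ be a random graph on the node set $\mathbb{N}$ whose distribution $P$ is exchangeable, and let $\phi:\mathcal{U}\to\mathbb{R}$ be the function determined by its Möbius parameter via $\phi([F]) = Z(F) = P(F\subseteq G)$ for every finite labeled graph $F$ with node set contained in $\mathbb{N}$. Then $\phi$ is bounded and positive definite on the semigroup $(\mathcal{U},+)$ and $\phi(\emptyset)=1$; that is, $\phi\in\mathcal{P}^b_1(\mathcal{U})$.
   Context: All graphs are simple. For $n\in\mathbb{N}$, $\mathcal{L}_n$ is the set of labeled simple graphs with node set $[n]=\{1,\dots,n\}$, and $\mathcal{L}_\infty$ is the set of simple graphs with node set $\mathbb{N}$; a random graph is a random element of $\mathcal{L}_\infty$ (with the $\sigma$-algebra generated by the edge indicators). For $G\in\mathcal{L}_\infty$ and $n\in\mathbb{N}$, $G[n]\in\mathcal{L}_n$ is the subgraph induced by $[n]$. For $H\in\mathcal{L}_n$ and a permutation $\sigma$ of $[n]$, $H_\sigma$ is the relabeled graph with $i\sim j$ in $H$ iff $\sigma(i)\sim\sigma(j)$ in $H_\sigma$. The distribution $P$ is exchangeable if $P(G[n]=H)=P(G[n]=H_\sigma)$ for all $n$, all $H\in\mathcal{L}_n$ and all permutations $\sigma$ of $[n]$. For a finite labeled graph $F$ with node set in $\mathbb{N}$, $F\subseteq G$ means every edge of $F$ is an edge of $G$; the function $Z(F)=P(F\subseteq G)$ is the Möbius parameter of $P$. $\mathcal{U}$ denotes the set of unlabeled finite simple graphs (isomorphism classes $[F]$ of finite labeled graphs $F$), including the empty graph $\emptyset$;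 under exchangeability $Z(F)$ depends only on $[F]$, which defines $\phi$. $(\mathcal{U},+)$ is the Abelian semigroup where $U+V$ is the node-disjoint union, with neutral element $\emptyset$. A function $\phi:\mathcal{U}\to\mathbb{R}$ is positive definite if $\sum_{j,k=1}^n c_jc_k\phi(s_j+s_k)\ge 0$ for all $n\in\mathbb{N}$, $c_j\in\mathbb{R}$, $s_j\in\mathcal{U}$. $\mathcal{P}^b_1(\mathcal{U})$ is the set of bounded positive definite functions $\phi$ on $\mathcal{U}$ with $\phi(\emptyset)=1$. *)

theory Defs
  imports "HOL-Probability.Probability"
begin

text \<open>A (simple) graph is represented by its set of edges, each edge being a
  two-element set of nodes.\<close>

definition nodes_pos :: "nat set" where
  "nodes_pos = {1..}"

definition edge_set_on :: "nat set \<Rightarrow> nat set set" where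
  "edge_set_on V = {e. \<exists>a b. a \<noteq> b \<and> a \<in> V \<and> b \<in> V \<and> e = {a, b}}"

definition L_inf :: "nat set set set" where
  "L_inf = Pow (edge_set_on nodes_pos)"

definition L_n :: "nat \<Rightarrow> nat set set set" where
  "L_n n = Pow (edge_set_on {1..n})"

definition graph_sigma :: "nat set set measure" where
  "graph_sigma = sigma L_inf {{G \<in> L_inf. e \<in> G} | e. e \<in> edge_set_on nodes_pos}"

definition induced :: "nat set set \<Rightarrow> nat \<Rightarrow> nat set set" where
  "induced G n = {e \<in> G. e \<subseteq> {1..n}}"

definition relabel :: "(nat \<Rightarrow> nat) \<Rightarrow> nat set set \<Rightarrow> nat set set" where
  "relabel \<sigma> H = (\<lambda>e. \<sigma> ` e) ` H"

text \<open>Exchangeability of a distribution P on \<open>L_\<infinity>\<close> (the random graph G is the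
  identity on the sample space).\<close>
definition exchangeable :: "nat set set measure \<Rightarrow> bool" where
  "exchangeable P \<longleftrightarrow>
     (\<forall>n H \<sigma>. H \<in> L_n n \<longrightarrow> \<sigma> permutes {1..n} \<longrightarrow>
        measure P {G \<in> space P. induced G n = H}
      = measure P {G \<in> space P. induced G n = relabel \<sigma> H})"

definition moebius_Z :: "nat set set measure \<Rightarrow> nat set set \<Rightarrow> real" where
  "moebius_Z P F = measure P {G \<in> space P. F \<subseteq> G}"

text \<open>A finite labeled graph: a finite node set V \<subseteq> \<nat> (as labels) together with
  an edge set on V.\<close>
definition fg_valid :: "nat set \<times> nat set set \<Rightarrow> bool" where
  "fg_valid F \<longleftrightarrow> finite (fst F) \<and> snd F \<subseteq> edge_set_on (fst F)"

definition fg_iso :: "nat set \<times> nat set set \<Rightarrow> nat set \<times> nat set set \<Rightarrow> bool" where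
  "fg_iso F1 F2 \<longleftrightarrow> fg_valid F1 \<and> fg_valid F2 \<and>
     (\<exists>f. bij_betw f (fst F1) (fst F2) \<and> snd F2 = (\<lambda>e. f ` e) ` snd F1)"

lemma edge_sub: "F \<subseteq> edge_set_on V \<Longrightarrow> e \<in> F \<Longrightarrow> e \<subseteq> V"
  unfolding edge_set_on_def by auto

lemma fg_iso_sym: "fg_iso F1 F2 \<Longrightarrow> fg_iso F2 F1"
proof -
  assume "fg_iso F1 F2"
  then obtain f where v: "fg_valid F1" "fg_valid F2" and b: "bij_betw f (fst F1) (fst F2)"
    and E: "snd F2 = (\<lambda>e. f ` e) ` snd F1" unfolding fg_iso_def by blast
  let ?g = "inv_into (fst F1) f"
  have bg: "bij_betw ?g (fst F2) (fst F1)" using b by (rule bij_betw_inv_into)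
  have "\<And>e. e \<in> snd F1 \<Longrightarrow> ?g ` f ` e = e"
  proof -
    fix e assume "e \<in> snd F1"
    then have "e \<subseteq> fst F1" using v(1) edge_sub unfolding fg_valid_def by blast
    then show "?g ` f ` e = e" using b
      by (metis bij_betw_def inv_into_image_cancel)
  qed
  note * = this
  have "(\<lambda>e. ?g ` e) ` snd F2 = snd F1"
  proof
    show "(\<lambda>e. ?g ` e) ` snd F2 \<subseteq> snd F1"
    proof
      fix x assume "x \<in> (\<lambda>e. ?g ` e) ` snd F2"
      then obtain e where e: "e \<in> snd F1" "x = ?g ` f ` e" unfolding E by blast
      then show "x \<in> snd F1" using *[OF e(1)] by simp
    qed
    show "snd F1 \<subseteq> (\<lambda>e. ?g ` e) ` snd F2"
    proof
      fix e assume e: "e \<in> snd F1"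
      then have "f ` e \<in> snd F2" unfolding E by blast
      then have "?g ` f ` e \<in> (\<lambda>e. ?g ` e) ` snd F2" by (rule imageI)
      then show "e \<in> (\<lambda>e. ?g ` e) ` snd F2" using *[OF e] by simp
    qed
  qed
  then have "snd F1 = (\<lambda>e. ?g ` e) ` snd F2" by simp
  then show "fg_iso F2 F1" using v bg unfolding fg_iso_def by blast
qed

lemma fg_iso_trans: "fg_iso F1 F2 \<Longrightarrow> fg_iso F2 F3 \<Longrightarrow> fg_iso F1 F3"
proof -
  assume h1: "fg_iso F1 F2" and h2: "fg_iso F2 F3"
  from h1 have v1: "fg_valid F1" unfolding fg_iso_def by (elim conjE)
  from h2 have v3: "fg_valid F3" unfolding fg_iso_def by (elim conjE)
  from h1 obtain f where b: "bij_betw f (fst F1) (fst F2)"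
    and E: "snd F2 = (\<lambda>e. f ` e) ` snd F1" unfolding fg_iso_def by (elim conjE exE)
  from h2 obtain g where b2: "bij_betw g (fst F2) (fst F3)"
    and E2: "snd F3 = (\<lambda>e. g ` e) ` snd F2" unfolding fg_iso_def by (elim conjE exE)
  have bb: "bij_betw (g \<circ> f) (fst F1) (fst F3)" using b b2 by (rule bij_betw_trans)
  have EE: "snd F3 = (\<lambda>e. (g \<circ> f) ` e) ` snd F1"
    unfolding E2 E image_comp comp_def ..
  show ?thesis unfolding fg_iso_def using v1 v3 bb EE by blast
qed

lemma fg_iso_part_equivp: "part_equivp fg_iso"
proof (rule part_equivpI)
  have "fg_valid ({}, {})" unfolding fg_valid_def by simp
  then have "fg_iso ({}, {}) ({}, {})" unfolding fg_iso_def by auto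
  then show "\<exists>x. fg_iso x x" by blast
  show "symp fg_iso" unfolding symp_def using fg_iso_sym by blast
  show "transp fg_iso" unfolding transp_def using fg_iso_trans by blast
qed

text \<open>\<open>\<U>\<close>: unlabeled finite simple graphs = isomorphism classes of finite
  labeled graphs.\<close>
quotient_type ugraph = "nat set \<times> nat set set" / partial: fg_iso
  by (rule fg_iso_part_equivp)

definition fg_disj_union :: "nat set \<times> nat set set \<Rightarrow> nat set \<times> nat set set \<Rightarrow> nat set \<times> nat set set" where
  "fg_disj_union F1 F2 =
     ((\<lambda>x. 2 * x) ` fst F1 \<union> (\<lambda>x. 2 * x + 1) ` fst F2,
      (\<lambda>e. (\<lambda>x. 2 * x) ` e) ` snd F1 \<union> (\<lambda>e. (\<lambda>x. 2 * x + 1) ` e) ` snd F2)"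

definition ug_plus :: "ugraph \<Rightarrow> ugraph \<Rightarrow> ugraph" where
  "ug_plus U V = abs_ugraph (fg_disj_union (rep_ugraph U) (rep_ugraph V))"

definition ug_empty :: ugraph where
  "ug_empty = abs_ugraph ({}, {})"

definition positive_definite :: "(ugraph \<Rightarrow> real) \<Rightarrow> bool" where
  "positive_definite \<phi> \<longleftrightarrow>
     (\<forall>(n::nat) (c::nat \<Rightarrow> real) (s::nat \<Rightarrow> ugraph).
        0 \<le> (\<Sum>j\<in>{1..n}. \<Sum>k\<in>{1..n}. c j * c k * \<phi> (ug_plus (s j) (s k))))"

definition Pb1 :: "(ugraph \<Rightarrow> real) set" where
  "Pb1 = {\<phi>. (\<exists>B. \<forall>u. \<bar>\<phi> u\<bar> \<le> B) \<and> positive_definite \<phi> \<and> \<phi> ug_empty = 1}"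

end

theory Submission
  imports Defs
begin

lemma edge_set_on_Pow: "edge_set_on V \<subseteq> Pow V"
  unfolding edge_set_on_def by auto

lemma finite_edge_set_on: "finite V \<Longrightarrow> finite (edge_set_on V)"
  using edge_set_on_Pow by (meson finite_Pow_iff finite_subset)

lemma edge_set_on_mono: "V \<subseteq> W \<Longrightarrow> edge_set_on V \<subseteq> edge_set_on W"
  unfolding edge_set_on_def by blast

lemma induced_eq: "G \<in> L_inf \<Longrightarrow> induced G n = G \<inter> edge_set_on {1..n}"
  unfolding induced_def L_inf_def edge_set_on_def nodes_pos_def
  by (auto; (drule (1) subsetD; auto)?; blast)

lemma ES_pos: "edge_set_on {1..n} \<subseteq> edge_set_on nodes_pos"
  unfolding nodes_pos_def by (rule edge_set_on_mono) auto


locale gctx = prob_space M for M :: "nat set set measure" +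
  assumes sP: "sets M = sets graph_sigma"
begin

lemma space_M: "space M = L_inf"
proof -
  have "space M = space graph_sigma" using sP by (rule sets_eq_imp_space_eq)
  also have "\<dots> = L_inf" unfolding graph_sigma_def
    by (rule space_measure_of) (auto simp: L_inf_def)
  finally show ?thesis .
qed

lemma edge_meas: "e \<in> edge_set_on nodes_pos \<Longrightarrow> {G \<in> space M. e \<in> G} \<in> sets M"
  unfolding sP space_M graph_sigma_def
  by (subst sets_measure_of) (auto simp: L_inf_def intro!: sigma_sets.Basic)

lemma edge_meas_b: assumes "e \<in> edge_set_on nodes_pos" shows "{G \<in> space M. (e \<in> G) = b} \<in> sets M"
proof (cases b)
  case True then show ?thesis using edge_meas assms by simp
next
  case False
  have "{G \<in> space M. (e \<in> G) = b} = space M - {G \<in> space M. e \<in> G}" using False by auto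
  then show ?thesis using edge_meas assms by auto
qed


lemma restr_meas:
  assumes "finite E" "E \<subseteq> edge_set_on nodes_pos"
  shows "{G \<in> space M. Q (G \<inter> E)} \<in> sets M"
proof -
  have eq: "{G \<in> space M. Q (G \<inter> E)} =
    {G \<in> space M. \<exists>K\<in>Pow E. Q K \<and> (\<forall>e\<in>E. (e \<in> G) = (e \<in> K))}"
  proof (rule Collect_cong)
    fix G
    have "Q (G \<inter> E) \<longleftrightarrow> (\<exists>K\<in>Pow E. Q K \<and> (\<forall>e\<in>E. (e \<in> G) = (e \<in> K)))"
    proof
      assume "Q (G \<inter> E)"
      then show "\<exists>K\<in>Pow E. Q K \<and> (\<forall>e\<in>E. (e \<in> G) = (e \<in> K))"
        by (intro bexI[of _ "G \<inter> E"]) auto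
    next
      assume "\<exists>K\<in>Pow E. Q K \<and> (\<forall>e\<in>E. (e \<in> G) = (e \<in> K))"
      then obtain K where "K \<subseteq> E" "Q K" "\<forall>e\<in>E. (e \<in> G) = (e \<in> K)" by auto
      moreover then have "G \<inter> E = K" by auto
      ultimately show "Q (G \<inter> E)" by simp
    qed
    then show "(G \<in> space M \<and> Q (G \<inter> E)) = (G \<in> space M \<and> (\<exists>K\<in>Pow E. Q K \<and> (\<forall>e\<in>E. (e \<in> G) = (e \<in> K))))"
      by simp
  qed
  show ?thesis unfolding eq
    using assms
    by (intro sets.sets_Collect_finite_Ex sets.sets_Collect_conj sets.sets_Collect_const
        sets.sets_Collect_finite_All edge_meas_b) auto
qed

lemma Z_sum:
  assumes "F \<subseteq> edge_set_on {1..n}"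
  shows "moebius_Z M F = (\<Sum>H\<in>{H\<in>L_n n. F \<subseteq> H}. measure M {G\<in>space M. G \<inter> edge_set_on {1..n} = H})"
proof -
  let ?E = "edge_set_on {1..n}"
  have fin: "finite ?E" by (rule finite_edge_set_on) simp
  have eq: "{G\<in>space M. F \<subseteq> G} = (\<Union>H\<in>{H\<in>L_n n. F \<subseteq> H}. {G\<in>space M. G \<inter> ?E = H})"
    using assms unfolding L_n_def by auto
  have "measure M (\<Union>H\<in>{H\<in>L_n n. F \<subseteq> H}. {G\<in>space M. G \<inter> ?E = H})
     = (\<Sum>H\<in>{H\<in>L_n n. F \<subseteq> H}. measure M {G\<in>space M. G \<inter> ?E = H})"
  proof (rule finite_measure_finite_Union)
    show "finite {H\<in>L_n n. F \<subseteq> H}" using fin unfolding L_n_def by simp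
    show "(\<lambda>H. {G\<in>space M. G \<inter> ?E = H}) ` {H\<in>L_n n. F \<subseteq> H} \<subseteq> sets M"
      using restr_meas[OF fin ES_pos] by auto
    show "disjoint_family_on (\<lambda>H. {G\<in>space M. G \<inter> ?E = H}) {H\<in>L_n n. F \<subseteq> H}"
      unfolding disjoint_family_on_def by auto
  qed
  then show ?thesis unfolding moebius_Z_def eq .
qed

end

lemma relabel_comp: "relabel \<sigma> (relabel \<tau> H) = relabel (\<sigma> \<circ> \<tau>) H"
  unfolding relabel_def by (simp add: image_image image_comp)

lemma relabel_id: "relabel id H = H"
  unfolding relabel_def by simp

lemma relabel_ES:
  assumes "\<sigma> permutes {1..n}" "H \<subseteq> edge_set_on {1..n}"
  shows "relabel \<sigma> H \<subseteq> edge_set_on {1..n}"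
proof
  fix e assume "e \<in> relabel \<sigma> H"
  then obtain a b where ab: "a \<noteq> b" "a \<in> {1..n}" "b \<in> {1..n}" "e = \<sigma> ` {a, b}"
    using assms(2) unfolding relabel_def edge_set_on_def by blast
  have "\<sigma> a \<noteq> \<sigma> b" using ab(1) permutes_inj[OF assms(1)] by (meson injD)
  moreover have "\<sigma> a \<in> {1..n}" "\<sigma> b \<in> {1..n}"
    using ab(2,3) permutes_in_image[OF assms(1)] by auto
  ultimately show "e \<in> edge_set_on {1..n}" unfolding edge_set_on_def ab(4) by auto
qed

lemma (in gctx) Z_perm:
  assumes exch: "exchangeable M" and sig: "\<sigma> permutes {1..n}" and F: "F \<subseteq> edge_set_on {1..n}"
  shows "moebius_Z M (relabel \<sigma> F) = moebius_Z M F"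
proof -
  let ?E = "edge_set_on {1..n}"
  define f where "f H = measure M {G\<in>space M. G \<inter> ?E = H}" for H
  have F': "relabel \<sigma> F \<subseteq> ?E" by (rule relabel_ES[OF sig F])
  have isig: "inv \<sigma> permutes {1..n}" using sig by (rule permutes_inv)
  have ind: "{G\<in>space M. induced G n = H} = {G\<in>space M. G \<inter> ?E = H}" for H
    using induced_eq space_M by auto
  have ex: "f H = f (relabel \<sigma> H)" if "H \<in> L_n n" for H
  proof -
    have "measure M {G\<in>space M. induced G n = H} = measure M {G\<in>space M. induced G n = relabel \<sigma> H}"
      using exch that sig unfolding exchangeable_def by blast
    then show ?thesis unfolding f_def ind .
  qed
  have bij: "bij_betw (relabel \<sigma>) {H\<in>L_n n. F \<subseteq> H} {H\<in>L_n n. relabel \<sigma> F \<subseteq> H}"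
  proof (rule bij_betw_byWitness[where f'="relabel (inv \<sigma>)"])
    show "\<forall>a\<in>{H \<in> L_n n. F \<subseteq> H}. relabel (inv \<sigma>) (relabel \<sigma> a) = a"
      using permutes_inv_o(2)[OF sig] by (simp add: relabel_comp relabel_id)
    show "\<forall>a\<in>{H \<in> L_n n. relabel \<sigma> F \<subseteq> H}. relabel \<sigma> (relabel (inv \<sigma>) a) = a"
      using permutes_inv_o(1)[OF sig] by (simp add: relabel_comp relabel_id)
    show "relabel \<sigma> ` {H \<in> L_n n. F \<subseteq> H} \<subseteq> {H \<in> L_n n. relabel \<sigma> F \<subseteq> H}"
      using relabel_ES[OF sig] unfolding L_n_def by (auto simp: relabel_def)
    have "relabel (inv \<sigma>) (relabel \<sigma> F) = F"
      using permutes_inv_o(2)[OF sig] by (simp add: relabel_comp relabel_id)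
    then show "relabel (inv \<sigma>) ` {H \<in> L_n n. relabel \<sigma> F \<subseteq> H} \<subseteq> {H \<in> L_n n. F \<subseteq> H}"
    proof (intro subsetI, elim imageE)
      fix x H assume inv: "relabel (inv \<sigma>) (relabel \<sigma> F) = F" and x: "x = relabel (inv \<sigma>) H"
        and H: "H \<in> {H \<in> L_n n. relabel \<sigma> F \<subseteq> H}"
      have "x \<in> L_n n" using relabel_ES[OF isig] H unfolding x L_n_def by auto
      moreover have "relabel (inv \<sigma>) (relabel \<sigma> F) \<subseteq> x"
        using H unfolding x relabel_def by (intro image_mono) auto
      ultimately show "x \<in> {H \<in> L_n n. F \<subseteq> H}" using inv by auto
    qed
  qed
  have "moebius_Z M F = (\<Sum>H\<in>{H\<in>L_n n. F \<subseteq> H}. f H)"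
    unfolding f_def by (rule Z_sum[OF F])
  also have "\<dots> = (\<Sum>H\<in>{H\<in>L_n n. F \<subseteq> H}. f (relabel \<sigma> H))"
    using ex by (intro sum.cong) auto
  also have "\<dots> = (\<Sum>H\<in>{H\<in>L_n n. relabel \<sigma> F \<subseteq> H}. f H)"
    by (rule sum.reindex_bij_betw[OF bij])
  also have "\<dots> = moebius_Z M (relabel \<sigma> F)"
    unfolding f_def by (rule Z_sum[OF F', symmetric])
  finally show ?thesis ..
qed


lemma perm_extend:
  assumes "finite S" "A \<subseteq> S" "B \<subseteq> S" "bij_betw f A B"
  shows "\<exists>\<sigma>. \<sigma> permutes S \<and> (\<forall>x\<in>A. \<sigma> x = f x)"
proof -
  have fA: "finite A" "finite B" using assms finite_subset by auto
  have "card A = card B" using assms(4) by (rule bij_betw_same_card)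
  then have "card (S - A) = card (S - B)"
    using assms fA by (simp add: card_Diff_subset)
  then obtain g where g: "bij_betw g (S - A) (S - B)"
    using finite_same_card_bij[of "S - A" "S - B"] assms(1) by auto
  define \<sigma> where "\<sigma> x = (if x \<in> A then f x else if x \<in> S then g x else x)" for x
  have "bij_betw \<sigma> A B" using assms(4) bij_betw_cong[of A \<sigma> f B] by (simp add: \<sigma>_def)
  moreover have "bij_betw \<sigma> (S - A) (S - B)" using g bij_betw_cong[of "S - A" \<sigma> g "S - B"] by (simp add: \<sigma>_def)
  ultimately have "bij_betw \<sigma> (A \<union> (S - A)) (B \<union> (S - B))" by (rule bij_betw_combine) blast
  moreover have "A \<union> (S - A) = S" "B \<union> (S - B) = S" using assms by auto
  ultimately have "bij_betw \<sigma> S S" by simp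
  then have "\<sigma> permutes S" by (rule bij_imp_permutes) (use assms(2) in \<open>auto simp add: \<sigma>_def\<close>)
  moreover have "\<forall>x\<in>A. \<sigma> x = f x" unfolding \<sigma>_def by simp
  ultimately show ?thesis by blast
qed

lemma (in gctx) Zinv:
  assumes exch: "exchangeable M" and iso: "fg_iso A B"
    and pA: "fst A \<subseteq> nodes_pos" and pB: "fst B \<subseteq> nodes_pos"
  shows "moebius_Z M (snd A) = moebius_Z M (snd B)"
proof -
  from iso obtain f where vA: "fg_valid A" and vB: "fg_valid B" and b: "bij_betw f (fst A) (fst B)"
    and E: "snd B = (\<lambda>e. f ` e) ` snd A" unfolding fg_iso_def by blast
  define n where "n = Max (fst A \<union> fst B \<union> {0})"
  have fin: "finite (fst A \<union> fst B \<union> {0})" using vA vB unfolding fg_valid_def by auto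
  have sub: "fst A \<subseteq> {1..n}" "fst B \<subseteq> {1..n}"
  proof -
    have "x \<le> n" if "x \<in> fst A \<union> fst B" for x using Max_ge[OF fin] that unfolding n_def by blast
    then show "fst A \<subseteq> {1..n}" "fst B \<subseteq> {1..n}" using pA pB unfolding nodes_pos_def by fastforce+
  qed
  obtain \<sigma> where sig: "\<sigma> permutes {1..n}" and agree: "\<forall>x\<in>fst A. \<sigma> x = f x"
    using perm_extend[OF _ sub b] by auto
  have "snd B = relabel \<sigma> (snd A)"
    unfolding E relabel_def
  proof (rule image_cong[OF refl])
    fix e assume "e \<in> snd A"
    then have "e \<subseteq> fst A" using vA edge_sub unfolding fg_valid_def by blast
    then show "f ` e = \<sigma> ` e" using agree by (metis image_cong subsetD)
  qed
  moreover have "snd A \<subseteq> edge_set_on {1..n}"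
    using vA edge_set_on_mono[OF sub(1)] unfolding fg_valid_def by blast
  ultimately show ?thesis using Z_perm[OF exch sig] by simp
qed

lemma (in gctx) psd:
  assumes "finite I" "finite K" and B: "\<And>j m. j \<in> I \<Longrightarrow> m \<in> K \<Longrightarrow> B j m \<in> sets M"
  shows "0 \<le> (\<Sum>m\<in>K. \<Sum>m'\<in>K. \<Sum>j\<in>I. \<Sum>k\<in>I. c j * c k * measure M (B j m \<inter> B k m'))"
proof -
  define X where "X x = (\<Sum>m\<in>K. \<Sum>j\<in>I. c j * indicator (B j m) x)" for x :: "nat set set"
  have int: "integrable M (indicator A :: _ \<Rightarrow> real)" if "A \<in> sets M" for A
    using that emeasure_finite by (simp add: less_top[symmetric])
  have sq: "(X x)^2 = (\<Sum>m\<in>K. \<Sum>m'\<in>K. \<Sum>j\<in>I. \<Sum>k\<in>I. c j * c k * indicator (B j m \<inter> B k m') x)" for x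
  proof -
    have "(X x)^2 = (\<Sum>m\<in>K. \<Sum>m'\<in>K. (\<Sum>j\<in>I. c j * indicator (B j m) x) * (\<Sum>k\<in>I. c k * indicator (B k m') x))"
      unfolding X_def power2_eq_square by (rule sum_product)
    also have "\<dots> = (\<Sum>m\<in>K. \<Sum>m'\<in>K. \<Sum>j\<in>I. \<Sum>k\<in>I. (c j * indicator (B j m) x) * (c k * indicator (B k m') x))"
      by (simp only: sum_product)
    also have "\<dots> = (\<Sum>m\<in>K. \<Sum>m'\<in>K. \<Sum>j\<in>I. \<Sum>k\<in>I. c j * c k * indicator (B j m \<inter> B k m') x)"
      by (simp only: indicator_inter_arith mult_ac)
    finally show ?thesis .
  qed
  have meas: "measure M (B j m \<inter> B k m') = integral\<^sup>L M (indicator (B j m \<inter> B k m'))"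
    if "j \<in> I" "k \<in> I" "m \<in> K" "m' \<in> K" for j k m m'
  proof -
    have "B j m \<inter> B k m' \<subseteq> space M" using B[OF that(1,3)] sets.sets_into_space by blast
    then show ?thesis by (simp add: Int_absorb2)
  qed
  have "integral\<^sup>L M (\<lambda>x. (X x)^2) = (\<Sum>m\<in>K. \<Sum>m'\<in>K. \<Sum>j\<in>I. \<Sum>k\<in>I. c j * c k * measure M (B j m \<inter> B k m'))"
  proof -
    let ?f = "\<lambda>m m' j k x. c j * c k * indicator (B j m \<inter> B k m') x"
    have i: "integrable M (?f m m' j k)" if "j \<in> I" "k \<in> I" "m \<in> K" "m' \<in> K" for j k m m'
      using that by (intro integrable_mult_right int sets.Int B)
    have "integral\<^sup>L M (\<lambda>x. \<Sum>m\<in>K. \<Sum>m'\<in>K. \<Sum>j\<in>I. \<Sum>k\<in>I. ?f m m' j k x)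
        = (\<Sum>m\<in>K. integral\<^sup>L M (\<lambda>x. \<Sum>m'\<in>K. \<Sum>j\<in>I. \<Sum>k\<in>I. ?f m m' j k x))"
      using i by (intro Bochner_Integration.integral_sum integrable_sum) auto
    also have "\<dots> = (\<Sum>m\<in>K. \<Sum>m'\<in>K. integral\<^sup>L M (\<lambda>x. \<Sum>j\<in>I. \<Sum>k\<in>I. ?f m m' j k x))"
      using i by (intro sum.cong refl Bochner_Integration.integral_sum integrable_sum) auto
    also have "\<dots> = (\<Sum>m\<in>K. \<Sum>m'\<in>K. \<Sum>j\<in>I. integral\<^sup>L M (\<lambda>x. \<Sum>k\<in>I. ?f m m' j k x))"
      using i by (intro sum.cong refl Bochner_Integration.integral_sum integrable_sum) auto
    also have "\<dots> = (\<Sum>m\<in>K. \<Sum>m'\<in>K. \<Sum>j\<in>I. \<Sum>k\<in>I. integral\<^sup>L M (?f m m' j k))"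
      using i by (intro sum.cong refl Bochner_Integration.integral_sum integrable_sum) auto
    also have "\<dots> = (\<Sum>m\<in>K. \<Sum>m'\<in>K. \<Sum>j\<in>I. \<Sum>k\<in>I. c j * c k * measure M (B j m \<inter> B k m'))"
      by (intro sum.cong refl) (simp add: meas)
    finally show ?thesis unfolding sq .
  qed
  moreover have "0 \<le> integral\<^sup>L M (\<lambda>x. (X x)^2)"
    by (rule integral_nonneg_AE) simp
  ultimately show ?thesis by simp
qed

definition imgG :: "(nat \<Rightarrow> nat) \<Rightarrow> nat set \<times> nat set set \<Rightarrow> nat set \<times> nat set set" where
  "imgG h F = (h ` fst F, (\<lambda>e. h ` e) ` snd F)"

lemma valid_imgG:
  assumes "fg_valid X" "inj_on h (fst X)"
  shows "fg_valid (imgG h X)"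
  unfolding fg_valid_def imgG_def fst_conv snd_conv
proof
  show "finite (h ` fst X)" using assms(1) unfolding fg_valid_def by simp
  show "(\<lambda>e. h ` e) ` snd X \<subseteq> edge_set_on (h ` fst X)"
  proof
    fix e' assume "e' \<in> (\<lambda>e. h ` e) ` snd X"
    then obtain a b where ab: "a \<noteq> b" "a \<in> fst X" "b \<in> fst X" "e' = h ` {a, b}"
      using assms(1) unfolding fg_valid_def edge_set_on_def by blast
    have "h a \<noteq> h b" using ab assms(2) by (meson inj_on_eq_iff)
    then show "e' \<in> edge_set_on (h ` fst X)" unfolding edge_set_on_def ab(4) using ab by auto
  qed
qed

lemma iso_imgG:
  assumes "fg_valid X" "inj_on h (fst X)"
  shows "fg_iso X (imgG h X)"
proof -
  have "bij_betw h (fst X) (fst (imgG h X))" using inj_on_imp_bij_betw[OF assms(2)] by (simp add: imgG_def)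
  moreover have "snd (imgG h X) = (\<lambda>e. h ` e) ` snd X" by (simp add: imgG_def)
  ultimately show ?thesis unfolding fg_iso_def using assms(1) valid_imgG[OF assms] by blast
qed

lemma iso_refl: "fg_valid X \<Longrightarrow> fg_iso X X"
  using iso_imgG[of X id] by (simp add: imgG_def)

lemma valid_rep: "fg_valid (rep_ugraph U)"
  using Quotient3_rep_reflp[OF Quotient3_ugraph, of U] unfolding fg_iso_def by simp

lemma rep_abs_iso:
  assumes v: "fg_valid X" shows "fg_iso (rep_ugraph (abs_ugraph X)) X"
proof -
  have q: "Quotient3 fg_iso abs_ugraph rep_ugraph" by (rule Quotient3_ugraph)
  have 1: "fg_iso (rep_ugraph (abs_ugraph X)) (rep_ugraph (abs_ugraph X))" by (rule Quotient3_rep_reflp[OF q])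
  have 2: "abs_ugraph (rep_ugraph (abs_ugraph X)) = abs_ugraph X" by (rule Quotient3_abs_rep[OF q])
  have 3: "fg_iso X X" by (rule iso_refl[OF v])
  show ?thesis using Quotient3_rel[OF q, of "rep_ugraph (abs_ugraph X)" X] 1 2 3 by simp
qed

definition (in gctx) phi :: "ugraph \<Rightarrow> real" where
  "phi U = moebius_Z M (snd (imgG Suc (rep_ugraph U)))"

lemma (in gctx) phi_iso:
  assumes exch: "exchangeable M" and v: "fg_valid X" and iso: "fg_iso X Y" and p: "fst Y \<subseteq> nodes_pos"
  shows "phi (abs_ugraph X) = moebius_Z M (snd Y)"
proof -
  let ?R = "rep_ugraph (abs_ugraph X)"
  have "fg_iso ?R (imgG Suc ?R)" by (rule iso_imgG[OF valid_rep]) simp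
  then have "fg_iso (imgG Suc ?R) Y"
    using fg_iso_trans[OF fg_iso_trans[OF fg_iso_sym rep_abs_iso[OF v]] iso] by blast
  moreover have "fst (imgG Suc ?R) \<subseteq> nodes_pos" by (auto simp: imgG_def nodes_pos_def)
  ultimately show ?thesis unfolding phi_def using Zinv[OF exch _ _ p] by blast
qed

lemma valid_disj:
  assumes "fg_valid X" "fg_valid Y"
  shows "fg_valid (fg_disj_union X Y)"
proof -
  let ?A = "fst (imgG (\<lambda>x. 2 * x) X)" and ?B = "fst (imgG (\<lambda>x. 2 * x + 1) Y)"
  have a: "fg_valid (imgG (\<lambda>x. 2 * x) X)" "fg_valid (imgG (\<lambda>x. 2 * x + 1) Y)"
    using assms by (auto intro!: valid_imgG simp: inj_on_def)
  have eq: "fg_disj_union X Y = (?A \<union> ?B, snd (imgG (\<lambda>x. 2 * x) X) \<union> snd (imgG (\<lambda>x. 2 * x + 1) Y))"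
    unfolding fg_disj_union_def imgG_def by simp
  have f: "finite (?A \<union> ?B)" using a unfolding fg_valid_def by blast
  have "snd (imgG (\<lambda>x. 2 * x) X) \<subseteq> edge_set_on ?A" using a unfolding fg_valid_def by blast
  also have "\<dots> \<subseteq> edge_set_on (?A \<union> ?B)" by (rule edge_set_on_mono) blast
  finally have s1: "snd (imgG (\<lambda>x. 2 * x) X) \<subseteq> edge_set_on (?A \<union> ?B)" .
  have "snd (imgG (\<lambda>x. 2 * x + 1) Y) \<subseteq> edge_set_on ?B" using a unfolding fg_valid_def by blast
  also have "\<dots> \<subseteq> edge_set_on (?A \<union> ?B)" by (rule edge_set_on_mono) blast
  finally have s2: "snd (imgG (\<lambda>x. 2 * x + 1) Y) \<subseteq> edge_set_on (?A \<union> ?B)" .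
  show ?thesis unfolding eq fg_valid_def fst_conv snd_conv using f s1 s2 by blast
qed


lemma (in gctx) ev_meas:
  assumes "fg_valid Y" "fst Y \<subseteq> nodes_pos"
  shows "{G\<in>space M. snd Y \<subseteq> G} \<in> sets M"
proof -
  have f: "finite (snd Y)"
    using assms(1) finite_edge_set_on finite_subset unfolding fg_valid_def by blast
  have e: "snd Y \<subseteq> edge_set_on nodes_pos"
    using assms edge_set_on_mono unfolding fg_valid_def by blast
  have "{G\<in>space M. snd Y \<subseteq> G} = {G\<in>space M. (\<lambda>X. snd Y \<subseteq> X) (G \<inter> snd Y)}" by auto
  then show ?thesis using restr_meas[OF f e, of "\<lambda>X. snd Y \<subseteq> X"] by simp
qed

lemma blk:
  fixes a b m m' Mb :: nat
  assumes "a < Mb" "b < Mb" "a + m * Mb = b + m' * Mb"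
  shows "m = m'"
proof -
  have "(a + m * Mb) div Mb = m" using assms(1) by simp
  moreover have "(b + m' * Mb) div Mb = m'" using assms(2) by simp
  ultimately show ?thesis using assms(3) by simp
qed

lemma coef_bound:
  fixes a b u :: real
  assumes "0 \<le> u" "u \<le> 1"
  shows "a * b * u \<le> \<bar>a\<bar> * \<bar>b\<bar>"
proof -
  have "a * b * u \<le> \<bar>a * b * u\<bar>" by simp
  also have "\<dots> = \<bar>a\<bar> * \<bar>b\<bar> * u" using assms by (simp add: abs_mult)
  also have "\<dots> \<le> \<bar>a\<bar> * \<bar>b\<bar>" using assms by (simp add: mult_left_le)
  finally show ?thesis .
qed

lemma (in gctx) phi_pd:
  assumes exch: "exchangeable M"
  shows "positive_definite phi"
  unfolding positive_definite_def
proof (intro allI)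
  fix n :: nat and c :: "nat \<Rightarrow> real" and s :: "nat \<Rightarrow> ugraph"
  let ?J = "{1..n}"
  define R where "R j = rep_ugraph (s j)" for j
  have vR: "fg_valid (R j)" for j unfolding R_def by (rule valid_rep)
  have "finite (\<Union>j\<in>?J. fst (R j))" using vR unfolding fg_valid_def by auto
  then obtain Mb where Mb: "(\<Union>j\<in>?J. fst (R j)) \<subseteq> {..<Mb}" using finite_nat_bounded by blast
  have bnd: "x < Mb" if "j \<in> ?J" "x \<in> fst (R j)" for j x using Mb that by blast
  define g where "g m x = x + 1 + m * Mb" for m x :: nat
  have ginj: "inj_on (g m) X" for m X unfolding g_def inj_on_def by simp
  have vg: "fg_valid (imgG (g m) (R j))" for m j by (rule valid_imgG[OF vR ginj])
  have pg: "fst (imgG (g m) (R j)) \<subseteq> nodes_pos" for m j by (auto simp: imgG_def g_def nodes_pos_def)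
  define A where "A j m = {G\<in>space M. snd (imgG (g m) (R j)) \<subseteq> G}" for j m
  have Ameas: "A j m \<in> sets M" for j m unfolding A_def by (rule ev_meas[OF vg pg])
  define S where "S = (\<Sum>j\<in>?J. \<Sum>k\<in>?J. c j * c k * phi (ug_plus (s j) (s k)))"
  define T where "T m m' = (\<Sum>j\<in>?J. \<Sum>k\<in>?J. c j * c k * measure M (A j m \<inter> A k m'))" for m m'
  define C where "C = (\<Sum>j\<in>?J. \<Sum>k\<in>?J. \<bar>c j\<bar> * \<bar>c k\<bar>)"
  have off: "measure M (A j m \<inter> A k m') = phi (ug_plus (s j) (s k))"
    if jk: "j \<in> ?J" "k \<in> ?J" and mm: "m \<noteq> m'" for j k m m'
  proof -
    define D where "D = fg_disj_union (R j) (R k)"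
    have vD: "fg_valid D" unfolding D_def by (rule valid_disj[OF vR vR])
    define h where "h y = (if even y then g m (y div 2) else g m' (y div 2))" for y
    have fD: "fst D = (\<lambda>x. 2 * x) ` fst (R j) \<union> (\<lambda>x. 2 * x + 1) ` fst (R k)"
      unfolding D_def fg_disj_union_def by simp
    have sD: "snd D = (\<lambda>e. (\<lambda>x. 2 * x) ` e) ` snd (R j) \<union> (\<lambda>e. (\<lambda>x. 2 * x + 1) ` e) ` snd (R k)"
      unfolding D_def fg_disj_union_def by simp
    have h1: "h (2 * x) = g m x" for x unfolding h_def by simp
    have h2: "h (2 * x + 1) = g m' x" for x unfolding h_def by simp
    have h2': "h (Suc (2 * x)) = g m' x" for x unfolding h_def by simp
    have hinj: "inj_on h (fst D)"
    proof (rule inj_onI)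
      fix y1 y2 assume y: "y1 \<in> fst D" "y2 \<in> fst D" "h y1 = h y2"
      have mix: False if "a \<in> fst (R j)" "b \<in> fst (R k)" "g m a = g m' b" for a b
        using blk[of a Mb b m m'] bnd[OF jk(1) that(1)] bnd[OF jk(2) that(2)] that(3) mm
        unfolding g_def by simp
      from y(1,2) show "y1 = y2" unfolding fD
      proof (elim UnE imageE)
        fix a b assume "y1 = 2 * a" "y2 = 2 * b"
        then show "y1 = y2" using y(3) h1 ginj[of m UNIV] by (simp add: inj_on_def)
      next
        fix a b assume "y1 = 2 * a + 1" "y2 = 2 * b + 1"
        then show "y1 = y2" using y(3) h2 ginj[of m' UNIV] by (simp add: inj_on_def)
      next
        fix a b assume "y1 = 2 * a" "a \<in> fst (R j)" "y2 = 2 * b + 1" "b \<in> fst (R k)"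
        then show "y1 = y2" using y(3) h1 h2 mix by metis
      next
        fix a b assume "y1 = 2 * a + 1" "a \<in> fst (R k)" "y2 = 2 * b" "b \<in> fst (R j)"
        then show "y1 = y2" using y(3) h1 h2 mix by metis
      qed
    qed
    have sh: "snd (imgG h D) = snd (imgG (g m) (R j)) \<union> snd (imgG (g m') (R k))"
    proof -
      have e1: "(\<lambda>x. h (2 * x)) ` e = g m ` e" for e by (rule image_cong[OF refl]) (rule h1)
      have e2: "(\<lambda>x. h (2 * x + 1)) ` e = g m' ` e" for e by (rule image_cong[OF refl]) (rule h2)
      show ?thesis unfolding imgG_def snd_conv sD image_Un image_image e1 e2 ..
    qed
    have ph: "fst (imgG h D) \<subseteq> nodes_pos" unfolding imgG_def nodes_pos_def h_def g_def by auto
    have "phi (ug_plus (s j) (s k)) = phi (abs_ugraph D)" unfolding ug_plus_def D_def R_def ..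
    also have "\<dots> = moebius_Z M (snd (imgG h D))"
      by (rule phi_iso[OF exch vD iso_imgG[OF vD hinj] ph])
    also have "\<dots> = measure M (A j m \<inter> A k m')"
      unfolding moebius_Z_def A_def sh by (intro arg_cong[where f="measure M"]) auto
    finally show ?thesis ..
  qed
  have Toff: "T m m' = S" if "m \<noteq> m'" for m m'
    unfolding T_def S_def using off that by (intro sum.cong refl) auto
  have Tdiag: "T m m \<le> C" for m
    unfolding T_def C_def by (intro sum_mono coef_bound) auto
  have main: "0 \<le> real N * (C + real (N - 1) * S)" for N
  proof -
    have "0 \<le> (\<Sum>m\<in>{..<N}. \<Sum>m'\<in>{..<N}. T m m')"
      unfolding T_def by (rule psd) (auto simp: Ameas)
    also have "\<dots> = (\<Sum>m\<in>{..<N}. T m m + real (N - 1) * S)"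
    proof (rule sum.cong[OF refl])
      fix m assume m: "m \<in> {..<N}"
      have "(\<Sum>m'\<in>{..<N}. T m m') = T m m + (\<Sum>m'\<in>{..<N} - {m}. T m m')"
        using m by (simp add: sum.remove)
      also have "(\<Sum>m'\<in>{..<N} - {m}. T m m') = (\<Sum>m'\<in>{..<N} - {m}. S)"
        using Toff by (intro sum.cong refl) auto
      also have "\<dots> = real (N - 1) * S"
      proof -
        have "1 \<le> N" using m by auto
        then show ?thesis using m by (simp add: of_nat_diff)
      qed
      finally show "(\<Sum>m'\<in>{..<N}. T m m') = T m m + real (N - 1) * S" .
    qed
    also have "\<dots> \<le> (\<Sum>m\<in>{..<N}. C + real (N - 1) * S)"
      using Tdiag by (intro sum_mono) simp
    also have "\<dots> = real N * (C + real (N - 1) * S)" by (simp only: sum_constant card_lessThan)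
    finally show ?thesis .
  qed
  show "0 \<le> (\<Sum>j\<in>{1..n}. \<Sum>k\<in>{1..n}. c j * c k * phi (ug_plus (s j) (s k)))"
  proof (rule ccontr)
    assume "\<not> ?thesis"
    then have neg: "S < 0" unfolding S_def by simp
    obtain k :: nat where k: "C / (- S) < real k" using reals_Archimedean2 by blast
    have pS: "0 < - S" using neg by simp
    have "C < real k * (- S)" using k unfolding pos_divide_less_eq[OF pS] .
    then have "C + real k * S < 0" by simp
    then have "real (Suc k) * (C + real (Suc k - 1) * S) < 0"
      by (simp add: mult_pos_neg)
    then show False using main[of "Suc k"] by linarith
  qed
qed

theorem lemma1:
  fixes P :: "nat set set measure"
  assumes "prob_space P"
    and "sets P = sets graph_sigma"
    and "exchangeable P"
  shows "\<exists>\<phi> :: ugraph \<Rightarrow> real.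
           (\<forall>F. fg_valid F \<and> fst F \<subseteq> nodes_pos \<longrightarrow> \<phi> (abs_ugraph F) = moebius_Z P (snd F))
         \<and> \<phi> \<in> Pb1"
proof -
  interpret gctx P using assms(1,2) by (simp add: gctx_def gctx_axioms_def)
  have c1: "\<forall>F. fg_valid F \<and> fst F \<subseteq> nodes_pos \<longrightarrow> phi (abs_ugraph F) = moebius_Z P (snd F)"
    using phi_iso[OF assms(3)] iso_refl by blast
  have bd: "\<forall>u. \<bar>phi u\<bar> \<le> 1"
    unfolding phi_def moebius_Z_def by simp
  have v0: "fg_valid ({}, {})" unfolding fg_valid_def by simp
  have "phi ug_empty = moebius_Z P {}"
    unfolding ug_empty_def using phi_iso[OF assms(3) v0 iso_refl[OF v0]] by simp
  also have "\<dots> = 1" unfolding moebius_Z_def by (simp add: prob_space)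
  finally have e: "phi ug_empty = 1" .
  have "phi \<in> Pb1" unfolding Pb1_def using bd e phi_pd[OF assms(3)] by blast
  then show ?thesis using c1 by blast
qed
end
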